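(* There exists a $CS(3,K_4^{(3)}+e,gn+1)$ of type $(g^n:1)$ for each $(g,n)\in\{(5,3),(5,5),(6,4),(10,2)\}$.
   Context: $K_4^{(3)}+e$ denotes the 3-uniform hypergraph with vertex set $\{1,2,3,4,5\}$ and edge set $\{\{1,2,3\},\{1,2,4\},\{1,3,4\},\{2,3,4\},\{3,4,5\}\}$. A $CS(3,K_4^{(3)}+e,gn+s)$ of type $(g^n:s)$ is a quadruple $(X,S,\mathcal{T},\mathcal{A})$ where $|X|=gn+s$, $S\subseteq X$ with $|S|=s$ (the stem), $\mathcal{T}=\{G_1,\dots,G_n\}$ is a partition of $X\setminus S$ into $n$ groups of size $g$, and $\mathcal{A}$ is a collection of hypergraphs on subsets of $X$ (blocks), each isomorphic to $K_4^{(3)}+e$, such that every 3-subset $T\subseteq X$ with $|T\cap(S\cup G_i)|<3$ for all $i$ is an edge of exactly one block, and no 3-subset of any $S\cup G_i$ is an edge of any block. Here $s=1$. *)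

theory Defs
  imports Main
begin

definition K4e_edges :: "nat set set" where
  "K4e_edges = {{1,2,3},{1,2,4},{1,3,4},{2,3,4},{3,4,5}}"

text \<open>A block on X: a 3-uniform hypergraph (given by its edge set; it has no isolated
  vertices, so its vertex set is the union of its edges) isomorphic to K_4^(3)+e,
  whose vertices lie in X.\<close>
definition is_K4e_block :: "'a set \<Rightarrow> 'a set set \<Rightarrow> bool" where
  "is_K4e_block X B \<longleftrightarrow>
     (\<exists>f. inj_on f {1..5::nat} \<and> f ` {1..5} \<subseteq> X \<and> B = (\<lambda>e. f ` e) ` K4e_edges)"

definition is_CS_K4e :: "'a set \<Rightarrow> 'a set \<Rightarrow> 'a set set \<Rightarrow> 'a set set set
                         \<Rightarrow> nat \<Rightarrow> nat \<Rightarrow> nat \<Rightarrow> bool" where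
  "is_CS_K4e X S T A g n s \<longleftrightarrow>
     finite X \<and> card X = g * n + s \<and>
     S \<subseteq> X \<and> card S = s \<and>
     card T = n \<and> (\<forall>G\<in>T. card G = g) \<and>
     (\<forall>G1\<in>T. \<forall>G2\<in>T. G1 \<noteq> G2 \<longrightarrow> G1 \<inter> G2 = {}) \<and>
     \<Union>T = X - S \<and>
     (\<forall>B\<in>A. is_K4e_block X B) \<and>
     (\<forall>Tr. Tr \<subseteq> X \<and> card Tr = 3 \<and> (\<forall>G\<in>T. card (Tr \<inter> (S \<union> G)) < 3)
            \<longrightarrow> card {B\<in>A. Tr \<in> B} = 1) \<and>
     (\<forall>G\<in>T. \<forall>B\<in>A. \<forall>e\<in>B. \<not> e \<subseteq> S \<union> G)"

end

theory Submission
  imports Defs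
begin


fun bedges :: "nat list \<Rightarrow> nat list list" where
  "bedges [a,b,c,d,e] = [[a,b,c],[a,b,d],[a,c,d],[b,c,d],[c,d,e]]"
| "bedges _ = []"

definition codel :: "nat list \<Rightarrow> nat" where
  "codel l = foldl (\<lambda>a x. a * 64 + x) 0 (sort l)"

definition canonl :: "(nat \<Rightarrow> nat \<Rightarrow> nat) \<Rightarrow> nat \<Rightarrow> nat list \<Rightarrow> nat" where
  "canonl tau m e = Min (set (map (\<lambda>t. codel (map (tau t) e)) [0..<m]))"

definition crossN :: "nat \<Rightarrow> (nat \<Rightarrow> nat) \<Rightarrow> nat set \<Rightarrow> bool" where
  "crossN N grp Tr \<longleftrightarrow> (\<exists>x\<in>Tr. \<exists>y\<in>Tr. x < N \<and> y < N \<and> grp x \<noteq> grp y)"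

definition blk :: "(nat \<Rightarrow> nat \<Rightarrow> nat) \<Rightarrow> nat \<Rightarrow> nat list \<Rightarrow> nat set set" where
  "blk tau t b = (\<lambda>e. tau t ` set e) ` set (bedges b)"

lemma codel_set:
  assumes "distinct l1" "distinct l2" "set l1 = set l2"
  shows "codel l1 = codel l2"
proof -
  have "sort l1 = sorted_list_of_set (set l1)"
    using assms(1) by (simp add: sorted_list_of_set_sort_remdups distinct_remdups_id)
  moreover have "sort l2 = sorted_list_of_set (set l2)"
    using assms(2) by (simp add: sorted_list_of_set_sort_remdups distinct_remdups_id)
  ultimately show ?thesis using assms(3) by (simp add: codel_def)
qed

lemma bedges_props:
  assumes "length b = 5" "distinct b" "e \<in> set (bedges b)"
  shows "distinct e \<and> length e = 3 \<and> set e \<subseteq> set b"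
proof -
  obtain a0 a1 a2 a3 a4 where b: "b = [a0,a1,a2,a3,a4]"
    using assms(1) by (auto simp: numeral_eq_Suc length_Suc_conv)
  show ?thesis using assms b by auto
qed

lemma shift_image:
  assumes "(0::nat) < m"
  shows "(\<lambda>t. (t + s) mod m) ` {0..<m} = {0..<m}"
proof
  show "(\<lambda>t. (t + s) mod m) ` {0..<m} \<subseteq> {0..<m}" using assms by auto
  show "{0..<m} \<subseteq> (\<lambda>t. (t + s) mod m) ` {0..<m}"
  proof
    fix u assume u: "u \<in> {0..<m}"
    let ?t = "(u + (m - s mod m)) mod m"
    have "(?t + s) mod m = u"
    proof -
      have "(?t + s) mod m = (u + (m - s mod m) + s) mod m" by (simp add: mod_add_left_eq)
      also have "\<dots> = (u + (m - s mod m) + s mod m) mod m" by (simp add: mod_add_right_eq)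
      also have "\<dots> = (u + m) mod m" using assms
        by (metis add.assoc le_add_diff_inverse2 mod_less_divisor nat_less_le)
      also have "\<dots> = u" using u by simp
      finally show ?thesis .
    qed
    moreover have "?t \<in> {0..<m}" using assms by simp
    ultimately show "u \<in> (\<lambda>t. (t + s) mod m) ` {0..<m}" by (metis image_eqI)
  qed
qed




locale cs_setup =
  fixes N m n g :: nat and grp :: "nat \<Rightarrow> nat" and tau :: "nat \<Rightarrow> nat \<Rightarrow> nat"
  assumes N_def: "N = g * n"
    and g_pos: "0 < g" and m_pos: "0 < m"
    and grp_lt: "\<And>x. x < N \<Longrightarrow> grp x < n"
    and grp_card: "\<And>i. i < n \<Longrightarrow> card {x. x < N \<and> grp x = i} = g"
    and tau_N: "\<And>t. tau t N = N"
    and tau_lt: "\<And>t x. x < N \<Longrightarrow> tau t x < N"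
    and tau_inj: "\<And>t x y. x \<le> N \<Longrightarrow> y \<le> N \<Longrightarrow> tau t x = tau t y \<Longrightarrow> x = y"
    and tau_0: "\<And>x. x \<le> N \<Longrightarrow> tau 0 x = x"
    and tau_comp: "\<And>s t x. x \<le> N \<Longrightarrow> tau s (tau t x) = tau ((s + t) mod m) x"
    and tau_grp: "\<And>t x y. x < N \<Longrightarrow> y < N \<Longrightarrow> (grp (tau t x) = grp (tau t y)) = (grp x = grp y)"
begin

definition Grp :: "nat \<Rightarrow> nat set" where "Grp i = {x. x < N \<and> grp x = i}"

lemma tau_le: "x \<le> N \<Longrightarrow> tau t x \<le> N"
  using tau_N tau_lt by (metis le_neq_implies_less order_refl less_imp_le)

lemma tau_inj_on: "inj_on (tau t) {..N}"
  by (auto intro!: inj_onI dest: tau_inj)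

lemma tau_inv: assumes "t < m" "x \<le> N" shows "tau ((m - t) mod m) (tau t x) = x"
proof -
  have "((m - t) mod m + t) mod m = 0"
  proof (cases "t = 0")
    case True then show ?thesis by simp
  next
    case False then have "(m - t) mod m = m - t" using assms by simp
    then show ?thesis using assms by simp
  qed
  then show ?thesis using tau_comp[OF assms(2)] tau_0[OF assms(2)] by simp
qed

lemma cross_tau:
  assumes "crossN N grp E" shows "crossN N grp (tau t ` E)"
proof -
  from assms obtain x y where "x \<in> E" "y \<in> E" "x < N" "y < N" "grp x \<noteq> grp y"
    unfolding crossN_def by blast
  then show ?thesis unfolding crossN_def
    by (metis image_eqI tau_grp tau_lt)
qed

lemma distinct_map_tau:
  assumes "distinct e" "set e \<subseteq> {..N}" shows "distinct (map (tau t) e)"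
  using assms by (simp add: distinct_map inj_on_subset[OF tau_inj_on])

lemma canon_set:
  assumes "distinct e1" "distinct e2" "set e1 = set e2" "set e1 \<subseteq> {..N}"
  shows "canonl tau m e1 = canonl tau m e2"
proof -
  have "\<And>t. codel (map (tau t) e1) = codel (map (tau t) e2)"
    by (rule codel_set) (use assms distinct_map_tau in auto)
  then show ?thesis unfolding canonl_def by simp
qed

lemma canon_inv:
  assumes "distinct e" "set e \<subseteq> {..N}"
  shows "canonl tau m (map (tau s) e) = canonl tau m e"
proof -
  have eq: "map (tau t) (map (tau s) e) = map (tau ((t + s) mod m)) e" for t
    using assms(2) tau_comp by auto
  have "set (map (\<lambda>t. codel (map (tau t) (map (tau s) e))) [0..<m])
      = (\<lambda>u. codel (map (tau u) e)) ` ((\<lambda>t. (t + s) mod m) ` {0..<m})"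
    by (simp only: eq set_map set_upt image_image)
  also have "\<dots> = set (map (\<lambda>t. codel (map (tau t) e)) [0..<m])"
    by (simp add: shift_image[OF m_pos])
  finally show ?thesis unfolding canonl_def by simp
qed

lemma mod_cancel_aux:
  assumes "s < m" "t < m" "((m - t) mod m + s) mod m = 0" shows "s = t"
proof (cases "t = 0")
  case True then show ?thesis using assms by simp
next
  case False
  then have "(m - t) mod m = m - t" using assms by simp
  with assms have "(m - t + s) mod m = 0" by simp
  moreover have "0 < m - t + s" "m - t + s < 2 * m" using assms False by auto
  ultimately have "m - t + s = m"
  proof -
    assume a: "(m - t + s) mod m = 0" "0 < m - t + s" "m - t + s < 2 * m"
    then obtain k where k: "m - t + s = m * k" by (metis dvd_def mod_0_imp_dvd)
    have "k \<noteq> 0" using a(2) k by auto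
    moreover have "k < 2" using a(3) k by (metis mult.commute mult_less_cancel2)
    ultimately show ?thesis using k by (cases k) auto
  qed
  then show ?thesis using assms by simp
qed

end



context cs_setup begin

definition CT :: "nat set set" where
  "CT = {Tr. Tr \<subseteq> {..N} \<and> card Tr = 3 \<and> crossN N grp Tr}"

lemma Grp_sub: "Grp i \<subseteq> {..<N}" unfolding Grp_def by auto

lemma finite_Grp: "finite (Grp i)" using Grp_sub finite_subset by blast

lemma N_notin_Grp: "N \<notin> Grp i" unfolding Grp_def by auto

lemma card3_has_lt:
  assumes "Tr \<subseteq> {..N}" "card Tr = 3" shows "\<exists>x\<in>Tr. x < N"
proof (rule ccontr)
  assume "\<not> ?thesis"
  then have "Tr \<subseteq> {N}" using assms(1) by force
  then have "card Tr \<le> card {N}" by (intro card_mono) auto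
  then have "card Tr \<le> 1" by simp
  with assms(2) show False by simp
qed

lemma noncross_iff:
  assumes "Tr \<subseteq> {..N}" "card Tr = 3"
  shows "(\<not> crossN N grp Tr) \<longleftrightarrow> (\<exists>i<n. Tr \<subseteq> insert N (Grp i))"
proof
  assume nc: "\<not> crossN N grp Tr"
  obtain x where x: "x \<in> Tr" "x < N" using card3_has_lt[OF assms] by blast
  have "Tr \<subseteq> insert N (Grp (grp x))"
  proof
    fix y assume y: "y \<in> Tr"
    show "y \<in> insert N (Grp (grp x))"
    proof (cases "y = N")
      case False
      then have "y < N" using y assms(1) by force
      have "grp y = grp x" using nc x y \<open>y < N\<close> unfolding crossN_def by blast
      then show ?thesis using \<open>y < N\<close> unfolding Grp_def by simp
    qed simp
  qed
  then show "\<exists>i<n. Tr \<subseteq> insert N (Grp i)" using grp_lt[OF x(2)] by blast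
next
  assume "\<exists>i<n. Tr \<subseteq> insert N (Grp i)"
  then obtain i where i: "Tr \<subseteq> insert N (Grp i)" by blast
  show "\<not> crossN N grp Tr" unfolding crossN_def
  proof clarify
    fix x y assume "x \<in> Tr" "y \<in> Tr" "x < N" "y < N" "grp x \<noteq> grp y"
    then have "x \<in> Grp i" "y \<in> Grp i" using i by auto
    then show False using \<open>grp x \<noteq> grp y\<close> unfolding Grp_def by simp
  qed
qed

lemma card_CT: "card CT = (N + 1 choose 3) - n * ((g + 1) choose 3)"
proof -
  define All3 where "All3 = {Tr. Tr \<subseteq> {..N} \<and> card Tr = 3}"
  define F where "F i = {Tr. Tr \<subseteq> insert N (Grp i) \<and> card Tr = 3}" for i
  define NC where "NC = (\<Union>i\<in>{..<n}. F i)"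
  have mem: "Tr \<in> CT \<longleftrightarrow> Tr \<in> All3 \<and> Tr \<notin> NC" for Tr
  proof -
    have "Tr \<in> NC \<longleftrightarrow> (\<exists>i<n. Tr \<subseteq> insert N (Grp i) \<and> card Tr = 3)"
      unfolding NC_def F_def by blast
    then show ?thesis unfolding CT_def All3_def using noncross_iff[of Tr] by blast
  qed
  have CT_eq: "CT = All3 - NC" using mem by blast
  have ins: "insert N (Grp i) \<subseteq> {..N}" for i using Grp_sub by fastforce
  have NC_sub: "NC \<subseteq> All3"
    unfolding NC_def F_def All3_def using ins by blast
  have cA: "card All3 = (N + 1) choose 3"
    unfolding All3_def using n_subsets[of "{..N}" 3] by simp
  have cF: "card (F i) = (g + 1) choose 3" if "i < n" for i
  proof -
    have "card (Grp i) = g" using grp_card[OF that] unfolding Grp_def .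
    then have "card (insert N (Grp i)) = g + 1"
      using finite_Grp N_notin_Grp by simp
    moreover have "finite (insert N (Grp i))" using finite_Grp by simp
    ultimately show ?thesis unfolding F_def using n_subsets by metis
  qed
  have disj: "F i \<inter> F j = {}" if "i \<noteq> j" for i j
  proof (rule ccontr)
    assume "F i \<inter> F j \<noteq> {}"
    then obtain Tr where "Tr \<subseteq> insert N (Grp i)" "Tr \<subseteq> insert N (Grp j)" "card Tr = 3"
      unfolding F_def by auto
    have "Grp i \<inter> Grp j = {}" using that unfolding Grp_def by blast
    then have "insert N (Grp i) \<inter> insert N (Grp j) = {N}" by blast
    then have "Tr \<subseteq> {N}" using \<open>Tr \<subseteq> insert N (Grp i)\<close> \<open>Tr \<subseteq> insert N (Grp j)\<close> by blast
    then have "card Tr \<le> card {N}" by (intro card_mono) auto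
    then have "card Tr \<le> 1" by simp
    with \<open>card Tr = 3\<close> show False by simp
  qed
  have finF: "finite (F i)" for i
  proof -
    have "F i \<subseteq> Pow (insert N (Grp i))" unfolding F_def by blast
    moreover have "finite (Pow (insert N (Grp i)))" using finite_Grp by simp
    ultimately show ?thesis by (rule finite_subset)
  qed
  have cNC: "card NC = n * ((g + 1) choose 3)"
  proof -
    have "card NC = (\<Sum>i\<in>{..<n}. card (F i))"
      unfolding NC_def by (rule card_UN_disjoint) (use finF disj in blast)+
    also have "\<dots> = (\<Sum>i\<in>{..<n}. (g + 1) choose 3)" using cF by simp
    finally show ?thesis by simp
  qed
  have finA: "finite All3"
  proof -
    have "All3 \<subseteq> Pow {..N}" unfolding All3_def by blast
    then show ?thesis by (rule finite_subset) simp
  qed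
  show ?thesis using CT_eq NC_sub cA cNC card_Diff_subset[OF finite_subset[OF NC_sub finA] NC_sub] by simp
qed

end



context cs_setup begin

lemma CT_finite: "finite CT"
proof -
  have "CT \<subseteq> Pow {..N}" unfolding CT_def by blast
  then show ?thesis by (rule finite_subset) simp
qed

lemma main_design:
  fixes base :: "nat list list"
  assumes B1: "\<forall>b\<in>set base. length b = 5 \<and> distinct b \<and> (\<forall>x\<in>set b. x \<le> N)"
    and B2: "\<forall>e\<in>set (concat (map bedges base)). crossN N grp (set e)"
    and B3: "distinct (map (canonl tau m) (concat (map bedges base)))"
    and B4: "\<forall>e\<in>set (concat (map bedges base)). \<forall>t\<in>{1..<m}. codel (map (tau t) e) \<noteq> codel e"
    and B5: "m * length (concat (map bedges base)) = (N + 1 choose 3) - n * ((g + 1) choose 3)"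
  shows "is_CS_K4e {..N} {N} (Grp ` {..<n}) {blk tau t b | t b. t < m \<and> b \<in> set base} g n 1"
proof -
  define EL where "EL = concat (map bedges base)"
  define A where "A = {blk tau t b | t b. t < m \<and> b \<in> set base}"
  have EL_mem: "e \<in> set EL \<longleftrightarrow> (\<exists>b\<in>set base. e \<in> set (bedges b))" for e
    unfolding EL_def by simp
  have ELI: "e \<in> set EL" if "b \<in> set base" "e \<in> set (bedges b)" for b e
    using that unfolding EL_def by auto
  have ELE: "\<exists>b\<in>set base. e \<in> set (bedges b)" if "e \<in> set EL" for e
    using that unfolding EL_def by simp
  have EL_props: "distinct e \<and> length e = 3 \<and> set e \<subseteq> {..N}" if "e \<in> set EL" for e
  proof -
    have "\<exists>b\<in>set base. e \<in> set (bedges b)" using EL_mem[of e] that by simp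
    then obtain b where b: "b \<in> set base" "e \<in> set (bedges b)" by blast
    have bb: "length b = 5" "distinct b" "\<forall>x\<in>set b. x \<le> N" using bspec[OF B1 b(1)] by simp_all
    have "distinct e \<and> length e = 3 \<and> set e \<subseteq> set b" using bedges_props[OF bb(1) bb(2) b(2)] .
    moreover have "set b \<subseteq> {..N}" using bb(3) by blast
    ultimately show ?thesis by blast
  qed
  have distEL: "distinct EL" using B3 unfolding EL_def by (simp add: distinct_map)
  have injc: "inj_on (canonl tau m) (set EL)" using B3 unfolding EL_def by (simp add: distinct_map)
  have inj_main: "e1 = e2 \<and> s = t"
    if e1: "e1 \<in> set EL" and e2: "e2 \<in> set EL" and st: "s < m" "t < m"
      and eq: "tau s ` set e1 = tau t ` set e2" for e1 e2 s t
  proof -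
    define u where "u = (m - t) mod m"
    define d where "d = (u + s) mod m"
    have p1: "distinct e1" "set e1 \<subseteq> {..N}" using EL_props[OF e1] by auto
    have p2: "distinct e2" "set e2 \<subseteq> {..N}" using EL_props[OF e2] by auto
    have "tau u ` tau t ` set e2 = set e2"
    proof -
      have "tau u ` tau t ` set e2 = (\<lambda>x. tau u (tau t x)) ` set e2" by (simp add: image_image)
      also have "\<dots> = (\<lambda>x. x) ` set e2"
        by (rule image_cong) (use p2 tau_inv[OF st(2)] u_def in auto)
      finally show ?thesis by simp
    qed
    moreover have "tau u ` tau s ` set e1 = set (map (tau d) e1)"
    proof -
      have "tau u ` tau s ` set e1 = (\<lambda>x. tau u (tau s x)) ` set e1" by (simp add: image_image)
      also have "\<dots> = tau d ` set e1"
        by (rule image_cong) (use p1 tau_comp d_def in auto)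
      finally show ?thesis by simp
    qed
    ultimately have seq: "set (map (tau d) e1) = set e2" using eq by simp
    have sub: "set (map (tau d) e1) \<subseteq> {..N}" using p1 tau_le by auto
    have "canonl tau m e2 = canonl tau m (map (tau d) e1)"
      using canon_set[OF distinct_map_tau[OF p1] p2(1) seq sub] by simp
    also have "\<dots> = canonl tau m e1" using canon_inv[OF p1] .
    finally have "e1 = e2" using injc e1 e2 by (metis inj_onD)
    then have "codel (map (tau d) e1) = codel e1"
      using codel_set[OF distinct_map_tau[OF p1] p1(1)] seq by simp
    then have "d \<notin> {1..<m}" using B4 e1 unfolding EL_def by blast
    moreover have "d < m" unfolding d_def using m_pos by simp
    ultimately have "d = 0" by auto
    then have "s = t" using mod_cancel_aux[OF st] unfolding d_def u_def by simp
    with \<open>e1 = e2\<close> show ?thesis by simp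
  qed
  define Phi where "Phi = (\<lambda>(t, e). tau t ` set (e :: nat list))"
  define IM where "IM = Phi ` ({..<m} \<times> set EL)"
  have IM_sub: "IM \<subseteq> CT"
  proof
    fix Tr assume "Tr \<in> IM"
    then obtain t e where te: "t < m" "e \<in> set EL" "Tr = tau t ` set e"
      unfolding IM_def Phi_def by auto
    have p: "distinct e" "length e = 3" "set e \<subseteq> {..N}" using EL_props[OF te(2)] by auto
    have "card Tr = 3"
    proof -
      have "inj_on (tau t) (set e)" using inj_on_subset[OF tau_inj_on p(3)] .
      then have "card Tr = card (set e)" using te(3) by (simp add: card_image)
      also have "\<dots> = 3" using p distinct_card by metis
      finally show ?thesis .
    qed
    moreover have "Tr \<subseteq> {..N}" using te(3) p(3) tau_le by auto
    moreover have "crossN N grp Tr" using te cross_tau B2 unfolding EL_def by blast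
    ultimately show "Tr \<in> CT" unfolding CT_def by blast
  qed
  have inj_Phi: "inj_on Phi ({..<m} \<times> set EL)"
  proof (rule inj_onI)
    fix x y assume "x \<in> {..<m} \<times> set EL" "y \<in> {..<m} \<times> set EL" "Phi x = Phi y"
    then show "x = y" unfolding Phi_def using inj_main by (cases x; cases y) auto
  qed
  have "card IM = m * length EL"
    unfolding IM_def using card_image[OF inj_Phi] distinct_card[OF distEL] by (simp add: card_cartesian_product)
  then have "card IM = card CT" using B5 card_CT unfolding EL_def by simp
  then have IM_CT: "IM = CT" using card_subset_eq[OF CT_finite IM_sub] by simp
  have Grp_ne: "Grp i \<noteq> {}" if "i < n" for i
  proof -
    have "card (Grp i) = g" using grp_card[OF that] unfolding Grp_def .
    then show ?thesis using g_pos by auto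
  qed
  have Grp_inj: "inj_on Grp {..<n}"
  proof (rule inj_onI)
    fix i j assume "i \<in> {..<n}" "j \<in> {..<n}" "Grp i = Grp j"
    then obtain x where "x \<in> Grp i" "x \<in> Grp j" using Grp_ne by fastforce
    then show "i = j" unfolding Grp_def by simp
  qed
  have cross_not_sub: "\<not> E \<subseteq> {N} \<union> Grp i" if "crossN N grp E" for E i
  proof
    assume sub: "E \<subseteq> {N} \<union> Grp i"
    from that obtain x y where "x \<in> E" "y \<in> E" "x < N" "y < N" "grp x \<noteq> grp y"
      unfolding crossN_def by blast
    then have "x \<in> Grp i" "y \<in> Grp i" using sub by auto
    then show False using \<open>grp x \<noteq> grp y\<close> unfolding Grp_def by simp
  qed
  have blockA: "is_K4e_block {..N} (blk tau t b)" if "b \<in> set base" for t b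
  proof -
    have b5: "length b = 5" "distinct b" "\<forall>x\<in>set b. x \<le> N" using B1 that by auto
    obtain a0 a1 a2 a3 a4 where b: "b = [a0,a1,a2,a3,a4]"
      using b5(1) by (auto simp: numeral_eq_Suc length_Suc_conv)
    define f where "f i = tau t (if i = (1::nat) then a0 else if i = 2 then a1 else if i = 3 then a2
                             else if i = 4 then a3 else a4)" for i
    have le: "a0 \<le> N" "a1 \<le> N" "a2 \<le> N" "a3 \<le> N" "a4 \<le> N" using b5(3) b by auto
    have ne: "tau t x \<noteq> tau t y" if "x \<le> N" "y \<le> N" "x \<noteq> y" for x y
      using tau_inj that by blast
    have d: "a0 \<noteq> a1" "a0 \<noteq> a2" "a0 \<noteq> a3" "a0 \<noteq> a4" "a1 \<noteq> a2" "a1 \<noteq> a3" "a1 \<noteq> a4"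
       "a2 \<noteq> a3" "a2 \<noteq> a4" "a3 \<noteq> a4" using b5(2) b by auto
    have I: "{1..5::nat} = {1,2,3,4,5}" by auto
    have "inj_on f {1..5}" unfolding I f_def using ne le d by (simp add: inj_on_def)
    moreover have "f ` {1..5} \<subseteq> {..N}" unfolding I f_def using le tau_le by auto
    moreover have "blk tau t b = (\<lambda>e. f ` e) ` K4e_edges"
      unfolding blk_def b K4e_edges_def f_def by simp
    ultimately show ?thesis unfolding is_K4e_block_def by blast
  qed
  show ?thesis unfolding is_CS_K4e_def A_def[symmetric]
  proof (intro conjI)
    show "finite {..N}" by simp
    show "card {..N} = g * n + 1" using N_def by simp
    show "{N} \<subseteq> {..N}" by simp
    show "card {N} = 1" by simp
    show "card (Grp ` {..<n}) = n" using card_image[OF Grp_inj] by simp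
    show "\<forall>G\<in>Grp ` {..<n}. card G = g" using grp_card unfolding Grp_def by auto
    show "\<forall>G1\<in>Grp ` {..<n}. \<forall>G2\<in>Grp ` {..<n}. G1 \<noteq> G2 \<longrightarrow> G1 \<inter> G2 = {}"
      unfolding Grp_def by auto
    show "\<Union> (Grp ` {..<n}) = {..N} - {N}"
    proof
      show "\<Union> (Grp ` {..<n}) \<subseteq> {..N} - {N}" unfolding Grp_def by auto
      show "{..N} - {N} \<subseteq> \<Union> (Grp ` {..<n})"
      proof
        fix x assume "x \<in> {..N} - {N}"
        then have "x < N" by auto
        then show "x \<in> \<Union> (Grp ` {..<n})" using grp_lt unfolding Grp_def by blast
      qed
    qed
    show "\<forall>B\<in>A. is_K4e_block {..N} B" unfolding A_def using blockA by blast
    show "\<forall>G\<in>Grp ` {..<n}. \<forall>B\<in>A. \<forall>e\<in>B. \<not> e \<subseteq> {N} \<union> G"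
    proof (intro ballI)
      fix G B e assume G: "G \<in> Grp ` {..<n}" and B: "B \<in> A" and e: "e \<in> B"
      obtain t b where "B = blk tau t b" "b \<in> set base" using B unfolding A_def by blast
      then obtain e0 where "e0 \<in> set (bedges b)" "e = tau t ` set e0"
        using e unfolding blk_def by blast
      then have "e0 \<in> set EL" "e = tau t ` set e0" using ELI \<open>b \<in> set base\<close> by auto
      then have "crossN N grp e" using cross_tau B2 unfolding EL_def by blast
      then show "\<not> e \<subseteq> {N} \<union> G" using G cross_not_sub by blast
    qed
    show "\<forall>Tr. Tr \<subseteq> {..N} \<and> card Tr = 3 \<and> (\<forall>G\<in>Grp ` {..<n}. card (Tr \<inter> ({N} \<union> G)) < 3)
            \<longrightarrow> card {B \<in> A. Tr \<in> B} = 1"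
    proof (intro allI impI)
      fix Tr assume H: "Tr \<subseteq> {..N} \<and> card Tr = 3 \<and> (\<forall>G\<in>Grp ` {..<n}. card (Tr \<inter> ({N} \<union> G)) < 3)"
      have cr: "crossN N grp Tr"
      proof (rule ccontr)
        assume "\<not> crossN N grp Tr"
        have H1: "Tr \<subseteq> {..N}" "card Tr = 3" using H by simp_all
        have "\<exists>i<n. Tr \<subseteq> insert N (Grp i)"
          using noncross_iff[OF H1] \<open>\<not> crossN N grp Tr\<close> by simp
        then obtain i where i: "i < n" "Tr \<subseteq> insert N (Grp i)" by blast
        then have eqT: "Tr \<inter> ({N} \<union> Grp i) = Tr" by blast
        have "Grp i \<in> Grp ` {..<n}" using i(1) by simp
        then have "card (Tr \<inter> ({N} \<union> Grp i)) < 3" using H by blast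
        then show False using eqT H1 by simp
      qed
      then have "Tr \<in> IM" using IM_CT H unfolding CT_def by blast
      then obtain t e where te: "t < m" "e \<in> set EL" "Tr = tau t ` set e"
        unfolding IM_def Phi_def by auto
      obtain b where b: "b \<in> set base" "e \<in> set (bedges b)" using ELE[OF te(2)] by blast
      have "{B \<in> A. Tr \<in> B} = {blk tau t b}"
      proof
        show "{blk tau t b} \<subseteq> {B \<in> A. Tr \<in> B}"
          using te b unfolding A_def blk_def by blast
        show "{B \<in> A. Tr \<in> B} \<subseteq> {blk tau t b}"
        proof
          fix B assume "B \<in> {B \<in> A. Tr \<in> B}"
          then obtain t' b' where B: "B = blk tau t' b'" "b' \<in> set base" "t' < m" "Tr \<in> B"
            unfolding A_def by blast
          then obtain e' where e': "e' \<in> set (bedges b')" "Tr = tau t' ` set e'"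
            unfolding blk_def by blast
          have "e' \<in> set EL" using ELI[OF B(2) e'(1)] .
          then have "e = e' \<and> t = t'" using inj_main[OF te(2) _ te(1) B(3)] te(3) e'(2) by simp
          then have "set (bedges b) \<inter> set (bedges b') \<noteq> {}" using b e' by blast
          moreover have "\<forall>ys zs. ys \<in> set (map bedges base) \<and> zs \<in> set (map bedges base) \<and> ys \<noteq> zs
                  \<longrightarrow> set ys \<inter> set zs = {}"
            using distEL unfolding EL_def distinct_concat_iff by blast
          moreover have "bedges b \<in> set (map bedges base)" "bedges b' \<in> set (map bedges base)"
            using b(1) B(2) by simp_all
          ultimately have "bedges b = bedges b'" by blast
          then show "B \<in> {blk tau t b}" using B(1) \<open>e = e' \<and> t = t'\<close> unfolding blk_def by simp
        qed
      qed
      then show "card {B \<in> A. Tr \<in> B} = 1" by simp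
    qed
  qed
qed

end



definition tauc :: "nat \<Rightarrow> nat \<Rightarrow> nat \<Rightarrow> nat" where
  "tauc N t x = (if x = N then N else (x + t) mod N)"

lemma mod_add_rcancel_nat: "((x::nat) + t) mod N = (y + t) mod N \<Longrightarrow> x mod N = y mod N"
  using nat_mod_eq_iff by auto

lemma cyc_card:
  assumes "i < n" shows "card {x. x < g * n \<and> x mod n = i} = g"
proof -
  have "{x. x < g * n \<and> x mod n = i} = (\<lambda>k. i + n * k) ` {..<g}"
  proof
    show "{x. x < g * n \<and> x mod n = i} \<subseteq> (\<lambda>k. i + n * k) ` {..<g}"
    proof
      fix x assume x: "x \<in> {x. x < g * n \<and> x mod n = i}"
      then have "x = i + n * (x div n)" using mod_mult_div_eq[of x n] by simp
      moreover have "x div n < g" using x by (simp add: less_mult_imp_div_less)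
      ultimately show "x \<in> (\<lambda>k. i + n * k) ` {..<g}" by blast
    qed
    show "(\<lambda>k. i + n * k) ` {..<g} \<subseteq> {x. x < g * n \<and> x mod n = i}"
    proof
      fix x assume "x \<in> (\<lambda>k. i + n * k) ` {..<g}"
      then obtain k where k: "k < g" "x = i + n * k" by blast
      have "i + n * k < n + n * k" using assms by simp
      also have "\<dots> = n * (k + 1)" by simp
      also have "\<dots> \<le> n * g" using k(1) by (intro mult_le_mono2) simp
      finally have "x < g * n" using k by (simp add: mult.commute)
      moreover have "x mod n = i" using k assms by simp
      ultimately show "x \<in> {x. x < g * n \<and> x mod n = i}" by simp
    qed
  qed
  moreover have "inj_on (\<lambda>k. i + n * k) {..<g}" using assms by (intro inj_onI) simp
  ultimately show ?thesis by (simp add: card_image)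
qed

lemma cyc_setup:
  assumes g: "0 < g" and n: "0 < n"
  shows "cs_setup (g * n) (g * n) n g (\<lambda>x. x mod n) (tauc (g * n))"
proof -
  define N where "N = g * n"
  have N: "0 < N" using g n unfolding N_def by simp
  have dvd: "n dvd N" unfolding N_def by simp
  show ?thesis unfolding N_def[symmetric]
  proof
    show "N = g * n" by (simp add: N_def)
    show "0 < g" "0 < N" using g N by auto
    show "\<And>x. x < N \<Longrightarrow> x mod n < n" using n by simp
    show "\<And>i. i < n \<Longrightarrow> card {x. x < N \<and> x mod n = i} = g"
      unfolding N_def by (rule cyc_card)
    show "\<And>t. tauc N t N = N" by (simp add: tauc_def)
    show "\<And>t x. x < N \<Longrightarrow> tauc N t x < N" using N by (simp add: tauc_def)
    show "\<And>t x y. x \<le> N \<Longrightarrow> y \<le> N \<Longrightarrow> tauc N t x = tauc N t y \<Longrightarrow> x = y"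
    proof -
      fix t x y assume xy: "x \<le> N" "y \<le> N" "tauc N t x = tauc N t y"
      show "x = y"
      proof (cases "x = N")
        case True
        show "x = y"
        proof (rule ccontr)
          assume "x \<noteq> y"
          then have "y \<noteq> N" using True by simp
          then have "tauc N t y < N" using N by (simp add: tauc_def)
          moreover have "tauc N t x = N" using True by (simp add: tauc_def)
          ultimately show False using xy(3) by simp
        qed
      next
        case False
        show "x = y"
        proof (cases "y = N")
          case True
          have "tauc N t x < N" using N False by (simp add: tauc_def)
          moreover have "tauc N t y = N" using True by (simp add: tauc_def)
          ultimately show ?thesis using xy(3) by simp
        next
          case yN: False
          have "x < N" "y < N" using xy False yN by auto
          moreover have "(x + t) mod N = (y + t) mod N" using xy(3) False yN by (simp add: tauc_def)
          ultimately show "x = y" using mod_add_rcancel_nat by (metis mod_less)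
        qed
      qed
    qed
    show "\<And>x. x \<le> N \<Longrightarrow> tauc N 0 x = x" by (auto simp: tauc_def)
    show "\<And>s t x. x \<le> N \<Longrightarrow> tauc N s (tauc N t x) = tauc N ((s + t) mod N) x"
    proof -
      fix s t x assume "x \<le> N"
      show "tauc N s (tauc N t x) = tauc N ((s + t) mod N) x"
      proof (cases "x = N")
        case False
        then have "(x + t) mod N \<noteq> N" using N by (metis mod_less_divisor nat_neq_iff)
        then have "tauc N s (tauc N t x) = ((x + t) mod N + s) mod N" using False by (simp add: tauc_def)
        also have "\<dots> = (x + t + s) mod N" by (rule mod_add_left_eq)
        also have "\<dots> = (x + (s + t)) mod N" by (simp add: ac_simps)
        also have "\<dots> = (x + (s + t) mod N) mod N" by (simp add: mod_add_right_eq)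
        finally show ?thesis using False by (simp add: tauc_def)
      qed (simp add: tauc_def)
    qed
    show "\<And>t x y. x < N \<Longrightarrow> y < N \<Longrightarrow> (tauc N t x mod n = tauc N t y mod n) = (x mod n = y mod n)"
    proof -
      fix t x y assume "x < N" "y < N"
      then have "tauc N t x mod n = (x + t) mod n" "tauc N t y mod n = (y + t) mod n"
        using dvd by (simp_all add: tauc_def mod_mod_cancel)
      moreover have "((x + t) mod n = (y + t) mod n) = (x mod n = y mod n)"
      proof
        assume "(x + t) mod n = (y + t) mod n"
        then show "x mod n = y mod n" by (rule mod_add_rcancel_nat)
      next
        assume h: "x mod n = y mod n"
        have "(x + t) mod n = (x mod n + t) mod n" by (simp add: mod_add_left_eq)
        also have "\<dots> = (y mod n + t) mod n" using h by simp
        also have "\<dots> = (y + t) mod n" by (simp add: mod_add_left_eq)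
        finally show "(x + t) mod n = (y + t) mod n" .
      qed
      ultimately show "(tauc N t x mod n = tauc N t y mod n) = (x mod n = y mod n)" by simp
    qed
  qed
qed




definition taug :: "nat \<Rightarrow> nat \<Rightarrow> nat \<Rightarrow> nat \<Rightarrow> nat" where
  "taug g N t x = (if x = N then N else (x div g) * g + (x mod g + t) mod g)"

lemma taug_div: "0 < g \<Longrightarrow> ((q::nat) * g + r) div g = q + r div g"
  by simp

lemma grp_setup:
  assumes g: "0 < g" and n: "0 < n"
  shows "cs_setup (g * n) g n g (\<lambda>x. x div g) (taug g (g * n))"
proof -
  define N where "N = g * n"
  have N: "0 < N" using g n unfolding N_def by simp
  have lt: "(x div g) * g + r < N" if "x < N" "r < g" for x r
  proof -
    have "x < n * g" using that(1) unfolding N_def by (simp add: mult.commute)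
    then have "x div g < n" by (rule less_mult_imp_div_less)
    then have "x div g + 1 \<le> n" by simp
    then have "(x div g + 1) * g \<le> n * g" by (rule mult_le_mono1)
    moreover have "(x div g) * g + r < (x div g + 1) * g" using that(2) by simp
    ultimately show ?thesis unfolding N_def by (simp add: mult.commute)
  qed
  have dv: "((x div g) * g + r) div g = x div g" if "r < g" for x r
    using that g by simp
  have md: "((x div g) * g + r) mod g = r" if "r < g" for x r
    using that g by simp
  have tlt: "taug g N t x < N" if "x < N" for t x
    using that lt[of x "(x mod g + t) mod g"] g by (simp add: taug_def)
  show ?thesis unfolding N_def[symmetric]
  proof
    show "N = g * n" by (simp add: N_def)
    show "0 < g" using g by auto
    show "\<And>x. x < N \<Longrightarrow> x div g < n"
    proof -
      fix x assume "x < N"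
      then have "x < n * g" unfolding N_def by (simp add: mult.commute)
      then show "x div g < n" by (rule less_mult_imp_div_less)
    qed
    show "\<And>i. i < n \<Longrightarrow> card {x. x < N \<and> x div g = i} = g"
    proof -
      fix i assume i: "i < n"
      have "{x. x < N \<and> x div g = i} = {i * g..<i * g + g}"
      proof
        show "{x. x < N \<and> x div g = i} \<subseteq> {i * g..<i * g + g}"
        proof
          fix x assume "x \<in> {x. x < N \<and> x div g = i}"
          then have "x div g = i" by simp
          then have "x = i * g + x mod g" using div_mult_mod_eq[of x g] by simp
          moreover have "x mod g < g" using g by simp
          ultimately show "x \<in> {i * g..<i * g + g}" by (metis atLeastLessThan_iff le_add1 add_less_cancel_left)
        qed
        show "{i * g..<i * g + g} \<subseteq> {x. x < N \<and> x div g = i}"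
        proof
          fix x assume x: "x \<in> {i * g..<i * g + g}"
          define r where "r = x - i * g"
          have r: "x = i * g + r" "r < g" using x unfolding r_def by auto
          have "i * g + r < N"
          proof -
            have "i + 1 \<le> n" using i by simp
            then have "(i + 1) * g \<le> n * g" by (rule mult_le_mono1)
            then show ?thesis using r(2) unfolding N_def by (simp add: mult.commute)
          qed
          moreover have "x div g = i" using r g by simp
          ultimately show "x \<in> {x. x < N \<and> x div g = i}" using r by simp
        qed
      qed
      then show "card {x. x < N \<and> x div g = i} = g" by simp
    qed
    show "\<And>t. taug g N t N = N" by (simp add: taug_def)
    show "\<And>t x. x < N \<Longrightarrow> taug g N t x < N" by (rule tlt)
    show "\<And>t x y. x \<le> N \<Longrightarrow> y \<le> N \<Longrightarrow> taug g N t x = taug g N t y \<Longrightarrow> x = y"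
    proof -
      fix t x y assume xy: "x \<le> N" "y \<le> N" "taug g N t x = taug g N t y"
      show "x = y"
      proof (cases "x = N")
        case True
        show "x = y"
        proof (rule ccontr)
          assume "x \<noteq> y"
          then have "y < N" using True xy by simp
          then have "taug g N t y < N" by (rule tlt)
          moreover have "taug g N t x = N" using True by (simp add: taug_def)
          ultimately show False using xy(3) by simp
        qed
      next
        case False
        show "x = y"
        proof (cases "y = N")
          case True
          have "taug g N t x < N" using False xy by (intro tlt) simp
          moreover have "taug g N t y = N" using True by (simp add: taug_def)
          ultimately show ?thesis using xy(3) by simp
        next
          case yN: False
          have e: "(x div g) * g + (x mod g + t) mod g = (y div g) * g + (y mod g + t) mod g"
            using xy(3) False yN by (simp add: taug_def)
          have r1: "(x mod g + t) mod g < g" "(y mod g + t) mod g < g" using g by simp_all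
          have "x div g = y div g" using dv[OF r1(1), of x] dv[OF r1(2), of y] e by simp
          have "(x mod g + t) mod g = (y mod g + t) mod g"
            using md[OF r1(1), of x] md[OF r1(2), of y] e by simp
          then have "(x mod g + t) mod g = (y mod g + t) mod g" .
          then have "(x mod g) mod g = (y mod g) mod g" by (rule mod_add_rcancel_nat)
          then have hm: "x mod g = y mod g" by simp
          note hd = \<open>x div g = y div g\<close>
          have "x = x div g * g + x mod g" by (rule div_mult_mod_eq[symmetric])
          also have "\<dots> = y div g * g + y mod g" by (simp only: hd hm)
          also have "\<dots> = y" by (rule div_mult_mod_eq)
          finally show ?thesis .
        qed
      qed
    qed
    show "\<And>x. x \<le> N \<Longrightarrow> taug g N 0 x = x" by (simp add: taug_def)
    show "\<And>s t x. x \<le> N \<Longrightarrow> taug g N s (taug g N t x) = taug g N ((s + t) mod g) x"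
    proof -
      fix s t x assume "x \<le> N"
      show "taug g N s (taug g N t x) = taug g N ((s + t) mod g) x"
      proof (cases "x = N")
        case False
        then have xl: "x < N" using \<open>x \<le> N\<close> by simp
        have r1: "(x mod g + t) mod g < g" using g by simp
        have "taug g N t x \<noteq> N" using tlt[OF xl, of t] by simp
        then have "taug g N s (taug g N t x) = (x div g) * g + ((x mod g + t) mod g + s) mod g"
          using False dv[OF r1, of x] md[OF r1, of x] by (simp add: taug_def)
        also have "((x mod g + t) mod g + s) mod g = (x mod g + (s + t) mod g) mod g"
        proof -
          have "((x mod g + t) mod g + s) mod g = (x mod g + t + s) mod g" by (rule mod_add_left_eq)
          also have "\<dots> = (x mod g + (s + t)) mod g" by (simp add: ac_simps)
          also have "\<dots> = (x mod g + (s + t) mod g) mod g" by (simp add: mod_add_right_eq)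
          finally show ?thesis .
        qed
        finally show ?thesis using False by (simp add: taug_def)
      qed (simp add: taug_def)
    qed
    show "\<And>t x y. x < N \<Longrightarrow> y < N \<Longrightarrow> (taug g N t x div g = taug g N t y div g) = (x div g = y div g)"
    proof -
      fix t x y assume "x < N" "y < N"
      have r1: "(x mod g + t) mod g < g" "(y mod g + t) mod g < g" using g by simp_all
      have "taug g N t x div g = x div g" "taug g N t y div g = y div g"
        using dv[OF r1(1), of x] dv[OF r1(2), of y] \<open>x < N\<close> \<open>y < N\<close> by (simp_all add: taug_def)
      then show "(taug g N t x div g = taug g N t y div g) = (x div g = y div g)" by simp
    qed
  qed
qed



lemma choose3: "n choose 3 = n * ((n - 1) * (n - 1 - 1) div 2) div 3"
proof -
  have "3 * (n choose 3) = n * ((n - 1) choose 2)"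
    using times_binomial_minus1_eq[of 3 n] by simp
  also have "(n - 1) choose 2 = (n - 1) * (n - 1 - 1) div 2" by (rule choose_two)
  finally show ?thesis by simp
qed

definition "base10_2 = ([[0, 3, 7, 10, 20], [0, 15, 2, 9, 20], [0, 1, 8, 17, 20], [0, 15, 3, 8, 20], [9, 10, 0, 1, 20], [0, 5, 1, 16, 11], [0, 1, 4, 13, 15], [0, 18, 1, 15, 10], [1, 3, 0, 14, 11], [0, 1, 2, 7, 4]] :: nat list list)"

lemma B1_10_2: "\<forall>b\<in>set base10_2. length b = 5 \<and> distinct b \<and> (\<forall>x\<in>set b. x \<le> 20)"
  by (simp add: base10_2_def)
lemma B2_10_2: "\<forall>e\<in>set (concat (map bedges base10_2)). crossN 20 (\<lambda>x. x mod 2) (set e)"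
  by (simp add: base10_2_def crossN_def)
lemma B3_10_2: "distinct (map (canonl (tauc 20) 20) (concat (map bedges base10_2)))"
  by (simp add: base10_2_def canonl_def upt_rec codel_def tauc_def)
lemma B4_10_2: "\<forall>e\<in>set (concat (map bedges base10_2)). \<forall>t\<in>{1..<20}. codel (map (tauc 20 t) e) \<noteq> codel e"
  by (simp add: base10_2_def atLeastLessThan_upt upt_rec codel_def tauc_def)
lemma B5_10_2: "20 * length (concat (map bedges base10_2)) = (20 + 1 choose 3) - 2 * ((10 + 1) choose 3)"
  by (simp add: base10_2_def choose3)

lemma CS_10_2: "\<exists>(X::nat set) S T A. is_CS_K4e X S T A 10 2 1"
proof -
  interpret c: cs_setup "10 * 2" "10 * 2" 2 10 "\<lambda>x. x mod 2" "tauc (10 * 2)"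
    by (rule cyc_setup) simp_all
  have "is_CS_K4e {..10 * 2} {10 * 2} (c.Grp ` {..<2}) {blk (tauc (10 * 2)) t b | t b. t < 10 * 2 \<and> b \<in> set base10_2} 10 2 1"
    by (rule c.main_design) (use B1_10_2 B2_10_2 B3_10_2 B4_10_2 B5_10_2 in simp_all)
  then show ?thesis by blast
qed

definition "base5_3 = ([[0, 9, 5, 10, 15], [0, 15, 9, 13, 11], [0, 7, 1, 6, 15], [0, 15, 6, 12, 1], [9, 15, 2, 11, 0], [8, 11, 0, 15, 10], [5, 12, 6, 10, 0], [8, 11, 6, 14, 5], [7, 10, 0, 8, 14], [6, 11, 0, 9, 8], [0, 12, 7, 13, 9], [0, 6, 13, 14, 7], [0, 1, 8, 12, 11], [0, 1, 10, 11, 6], [0, 2, 7, 9, 11], [2, 8, 0, 5, 14], [0, 12, 2, 14, 7], [0, 10, 2, 13, 14], [1, 9, 0, 14, 11], [1, 14, 2, 6, 0]] :: nat list list)"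

lemma B1_5_3: "\<forall>b\<in>set base5_3. length b = 5 \<and> distinct b \<and> (\<forall>x\<in>set b. x \<le> 15)"
  by (simp add: base5_3_def)
lemma B2_5_3: "\<forall>e\<in>set (concat (map bedges base5_3)). crossN 15 (\<lambda>x. x div 5) (set e)"
  by (simp add: base5_3_def crossN_def)
lemma B3_5_3: "distinct (map (canonl (taug 5 15) 5) (concat (map bedges base5_3)))"
  by (simp add: base5_3_def canonl_def upt_rec codel_def taug_def)
lemma B4_5_3: "\<forall>e\<in>set (concat (map bedges base5_3)). \<forall>t\<in>{1..<5}. codel (map (taug 5 15 t) e) \<noteq> codel e"
  by (simp add: base5_3_def atLeastLessThan_upt upt_rec codel_def taug_def)
lemma B5_5_3: "5 * length (concat (map bedges base5_3)) = (15 + 1 choose 3) - 3 * ((5 + 1) choose 3)"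
  by (simp add: base5_3_def choose3)

lemma CS_5_3: "\<exists>(X::nat set) S T A. is_CS_K4e X S T A 5 3 1"
proof -
  interpret c: cs_setup "5 * 3" "5" 3 5 "\<lambda>x. x div 5" "taug 5 (5 * 3)"
    by (rule grp_setup) simp_all
  have "is_CS_K4e {..5 * 3} {5 * 3} (c.Grp ` {..<3}) {blk (taug 5 (5 * 3)) t b | t b. t < 5 \<and> b \<in> set base5_3} 5 3 1"
    by (rule c.main_design) (use B1_5_3 B2_5_3 B3_5_3 B4_5_3 B5_5_3 in simp_all)
  then show ?thesis by blast
qed

definition "base5_5 = ([[0, 25, 8, 21, 2], [3, 21, 0, 11, 25], [1, 25, 0, 7, 3], [9, 18, 0, 3, 25], [0, 3, 8, 17, 25], [5, 21, 0, 2, 25], [3, 23, 1, 4, 0], [17, 22, 0, 1, 14], [10, 23, 1, 8, 0], [0, 11, 13, 22, 2], [0, 1, 5, 18, 15], [0, 3, 1, 13, 6], [18, 23, 0, 6, 1], [0, 15, 1, 19, 8], [9, 11, 0, 1, 21], [7, 19, 0, 2, 1], [11, 22, 1, 10, 0], [2, 6, 0, 10, 18], [0, 6, 11, 17, 2], [16, 18, 0, 4, 2]] :: nat list list)"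

lemma B1_5_5: "\<forall>b\<in>set base5_5. length b = 5 \<and> distinct b \<and> (\<forall>x\<in>set b. x \<le> 25)"
  by (simp add: base5_5_def)
lemma B2_5_5: "\<forall>e\<in>set (concat (map bedges base5_5)). crossN 25 (\<lambda>x. x mod 5) (set e)"
  by (simp add: base5_5_def crossN_def)
lemma B3_5_5: "distinct (map (canonl (tauc 25) 25) (concat (map bedges base5_5)))"
  by (simp add: base5_5_def canonl_def upt_rec codel_def tauc_def)
lemma B4_5_5: "\<forall>e\<in>set (concat (map bedges base5_5)). \<forall>t\<in>{1..<25}. codel (map (tauc 25 t) e) \<noteq> codel e"
  by (simp add: base5_5_def atLeastLessThan_upt upt_rec codel_def tauc_def)
lemma B5_5_5: "25 * length (concat (map bedges base5_5)) = (25 + 1 choose 3) - 5 * ((5 + 1) choose 3)"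
  by (simp add: base5_5_def choose3)

lemma CS_5_5: "\<exists>(X::nat set) S T A. is_CS_K4e X S T A 5 5 1"
proof -
  interpret c: cs_setup "5 * 5" "5 * 5" 5 5 "\<lambda>x. x mod 5" "tauc (5 * 5)"
    by (rule cyc_setup) simp_all
  have "is_CS_K4e {..5 * 5} {5 * 5} (c.Grp ` {..<5}) {blk (tauc (5 * 5)) t b | t b. t < 5 * 5 \<and> b \<in> set base5_5} 5 5 1"
    by (rule c.main_design) (use B1_5_5 B2_5_5 B3_5_5 B4_5_5 B5_5_5 in simp_all)
  then show ?thesis by blast
qed

definition "base6_4 = ([[0, 2, 17, 24, 7], [11, 17, 0, 3, 24], [0, 9, 3, 14, 24], [0, 24, 1, 19, 7], [7, 18, 1, 15, 0], [1, 10, 0, 20, 18], [4, 18, 0, 17, 1], [0, 1, 14, 18, 3], [0, 7, 14, 19, 1], [3, 13, 0, 1, 9], [1, 22, 0, 2, 14], [5, 8, 0, 1, 12], [9, 11, 0, 16, 1], [5, 9, 0, 2, 13], [0, 3, 6, 15, 10], [0, 19, 2, 11, 15], [1, 4, 0, 6, 9], [0, 8, 2, 10, 5]] :: nat list list)"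

lemma B1_6_4: "\<forall>b\<in>set base6_4. length b = 5 \<and> distinct b \<and> (\<forall>x\<in>set b. x \<le> 24)"
  by (simp add: base6_4_def)
lemma B2_6_4: "\<forall>e\<in>set (concat (map bedges base6_4)). crossN 24 (\<lambda>x. x mod 4) (set e)"
  by (simp add: base6_4_def crossN_def)
lemma B3_6_4: "distinct (map (canonl (tauc 24) 24) (concat (map bedges base6_4)))"
  by (simp add: base6_4_def canonl_def upt_rec codel_def tauc_def)
lemma B4_6_4: "\<forall>e\<in>set (concat (map bedges base6_4)). \<forall>t\<in>{1..<24}. codel (map (tauc 24 t) e) \<noteq> codel e"
  by (simp add: base6_4_def atLeastLessThan_upt upt_rec codel_def tauc_def)
lemma B5_6_4: "24 * length (concat (map bedges base6_4)) = (24 + 1 choose 3) - 4 * ((6 + 1) choose 3)"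
  by (simp add: base6_4_def choose3)

lemma CS_6_4: "\<exists>(X::nat set) S T A. is_CS_K4e X S T A 6 4 1"
proof -
  interpret c: cs_setup "6 * 4" "6 * 4" 4 6 "\<lambda>x. x mod 4" "tauc (6 * 4)"
    by (rule cyc_setup) simp_all
  have "is_CS_K4e {..6 * 4} {6 * 4} (c.Grp ` {..<4}) {blk (tauc (6 * 4)) t b | t b. t < 6 * 4 \<and> b \<in> set base6_4} 6 4 1"
    by (rule c.main_design) (use B1_6_4 B2_6_4 B3_6_4 B4_6_4 B5_6_4 in simp_all)
  then show ?thesis by blast
qed

theorem lemma3p5:
  assumes "(g, n) \<in> {(5,3), (5,5), (6,4), (10,2)}"
  shows "\<exists>(X::nat set) S T A. is_CS_K4e X S T A g n 1"
  using assms CS_5_3 CS_5_5 CS_6_4 CS_10_2 by auto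

end
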